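(* Let $X$ and $Y$ be disjoint (finite or infinite) sets of cardinality at least two, let $M\le\mathrm{Sym}(X)$ and $N\le\mathrm{Sym}(Y)$ be permutation groups, let $T$ be the $(|X|,|Y|)$-biregular tree, and let $c$ be a legal colouring of $X$ and $Y$. Then $U_c(M,N)$ satisfies Tits' independence property (P).
   Context: $T$ has natural bipartition $VT=V_X\sqcup V_Y$ (vertices in $V_X$ have valency $|X|$, in $V_Y$ valency $|Y|$). $A(v)$, $\overline{A}(v)$ are the sets of arcs (ordered pairs of adjacent vertices) with origin, resp. terminus, $v$. A legal colouring is a map $c:AT\to X\cup Y$ restricting to a bijection $A(v)\to X$ for $v\in V_X$, to a bijection $A(v)\to Y$ for $v\in V_Y$, and constant on each $\overline{A}(v)$. $U_c(M,N)$ is the group of $g\in\mathrm{Aut}(T)$ with $gV_X=V_X$ and $c|_{A(gv)}\circ g|_{A(v)}\circ(c|_{A(v)})^{-1}$ in $M$ for $v\in V_X$ and in $N$ for $v\in V_Y$. Property (P): let $G$ act on a tree $T$. For a non-empty (finite or infinite) path $\mathcal{P}$ in $T$, let $\pi_{\mathcal{P}}(v)$ be the unique vertex of $\mathcal{P}$ closest to $v$; for $q\in V\mathcal{P}$, $\pi_{\mathcal{P}}^{-1}(q)$ spans a subtree invariant under the pointwise stabiliser $G_{(\mathcal{P})}$, and $G^q_{(\mathcal{P})}$ denotes the permutation group induced by $G_{(\mathcal{P})}$ on $\pi^{-1}_{\mathcal{P}}(q)$. $G$ has property (P) if, for every such path $\mathcal{P}$, the natural homomorphism $G_{(\mathcal{P})}\to\prod_{q\in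 V\mathcal{P}} G^q_{(\mathcal{P})}$ is an isomorphism. *)

theory Defs
  imports "HOL-Algebra.Bij" "HOL-Library.Equipollence"
begin

text \<open>Graphs: the vertex set is the whole type 'v, adjacency is a relation E.\<close>

definition edge_rel :: "('v \<Rightarrow> 'v \<Rightarrow> bool) \<Rightarrow> ('v \<times> 'v) set" where
  "edge_rel E = {(u, w). E u w}"

definition is_tree :: "('v \<Rightarrow> 'v \<Rightarrow> bool) \<Rightarrow> bool" where
  "is_tree E \<longleftrightarrow>
     (\<forall>u w. E u w \<longrightarrow> E w u) \<and> (\<forall>u. \<not> E u u) \<and>
     (\<forall>u w. (u, w) \<in> (edge_rel E)\<^sup>*) \<and>
     \<not> (\<exists>n (p :: nat \<Rightarrow> 'v). 3 \<le> n \<and> inj_on p {..<n} \<and>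
          (\<forall>i<n. E (p i) (p (Suc i mod n))))"

definition nbrs :: "('v \<Rightarrow> 'v \<Rightarrow> bool) \<Rightarrow> 'v \<Rightarrow> 'v set" where
  "nbrs E v = {w. E v w}"

definition arcs_from :: "('v \<Rightarrow> 'v \<Rightarrow> bool) \<Rightarrow> 'v \<Rightarrow> ('v \<times> 'v) set" where
  "arcs_from E v = {(v, w) | w. E v w}"

definition arcs_to :: "('v \<Rightarrow> 'v \<Rightarrow> bool) \<Rightarrow> 'v \<Rightarrow> ('v \<times> 'v) set" where
  "arcs_to E v = {(w, v) | w. E w v}"

definition biregular_bipartition ::
  "('v \<Rightarrow> 'v \<Rightarrow> bool) \<Rightarrow> 'v set \<Rightarrow> 'v set \<Rightarrow> 'c set \<Rightarrow> 'c set \<Rightarrow> bool" where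
  "biregular_bipartition E VX VY X Y \<longleftrightarrow>
     VX \<inter> VY = {} \<and> VX \<union> VY = UNIV \<and>
     (\<forall>u w. E u w \<longrightarrow> (u \<in> VX \<longleftrightarrow> w \<in> VY)) \<and>
     (\<forall>v\<in>VX. nbrs E v \<approx> X) \<and> (\<forall>v\<in>VY. nbrs E v \<approx> Y)"

definition legal_colouring ::
  "('v \<Rightarrow> 'v \<Rightarrow> bool) \<Rightarrow> 'v set \<Rightarrow> 'v set \<Rightarrow> 'c set \<Rightarrow> 'c set \<Rightarrow> ('v \<times> 'v \<Rightarrow> 'c) \<Rightarrow> bool" where
  "legal_colouring E VX VY X Y c \<longleftrightarrow>
     (\<forall>v\<in>VX. bij_betw c (arcs_from E v) X) \<and>
     (\<forall>v\<in>VY. bij_betw c (arcs_from E v) Y) \<and>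
     (\<forall>v. \<forall>a\<in>arcs_to E v. \<forall>b\<in>arcs_to E v. c a = c b)"

definition Aut :: "('v \<Rightarrow> 'v \<Rightarrow> bool) \<Rightarrow> ('v \<Rightarrow> 'v) set" where
  "Aut E = {g. bij g \<and> (\<forall>u w. E u w \<longleftrightarrow> E (g u) (g w))}"

text \<open>The local action c|A(gv) o g|A(v) o (c|A(v))^-1, as an extensional
  permutation of the colour set S (S = X for v in VX, S = Y for v in VY).\<close>

definition local_action ::
  "('v \<Rightarrow> 'v \<Rightarrow> bool) \<Rightarrow> ('v \<times> 'v \<Rightarrow> 'c) \<Rightarrow> ('v \<Rightarrow> 'v) \<Rightarrow> 'v \<Rightarrow> 'c set \<Rightarrow> ('c \<Rightarrow> 'c)" where
  "local_action E c g v S =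
     (\<lambda>x\<in>S. let a = inv_into (arcs_from E v) c x in c (g (fst a), g (snd a)))"

definition U ::
  "('v \<Rightarrow> 'v \<Rightarrow> bool) \<Rightarrow> 'v set \<Rightarrow> 'v set \<Rightarrow> 'c set \<Rightarrow> 'c set \<Rightarrow> ('v \<times> 'v \<Rightarrow> 'c)
     \<Rightarrow> ('c \<Rightarrow> 'c) set \<Rightarrow> ('c \<Rightarrow> 'c) set \<Rightarrow> ('v \<Rightarrow> 'v) set" where
  "U E VX VY X Y c M N =
     {g \<in> Aut E. g ` VX = VX \<and>
        (\<forall>v\<in>VX. local_action E c g v X \<in> M) \<and>
        (\<forall>v\<in>VY. local_action E c g v Y \<in> N)}"

definition is_path_vertices :: "('v \<Rightarrow> 'v \<Rightarrow> bool) \<Rightarrow> 'v set \<Rightarrow> bool" where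
  "is_path_vertices E P \<longleftrightarrow>
     (\<exists>(I :: int set) (p :: int \<Rightarrow> 'v). I \<noteq> {} \<and>
        (\<forall>i j k. i \<in> I \<longrightarrow> k \<in> I \<longrightarrow> i \<le> j \<longrightarrow> j \<le> k \<longrightarrow> j \<in> I) \<and>
        inj_on p I \<and> (\<forall>i. i \<in> I \<longrightarrow> i + 1 \<in> I \<longrightarrow> E (p i) (p (i + 1))) \<and>
        P = p ` I)"

definition tdist :: "('v \<Rightarrow> 'v \<Rightarrow> bool) \<Rightarrow> 'v \<Rightarrow> 'v \<Rightarrow> nat" where
  "tdist E u w = (LEAST n. (u, w) \<in> (edge_rel E) ^^ n)"

definition proj :: "('v \<Rightarrow> 'v \<Rightarrow> bool) \<Rightarrow> 'v set \<Rightarrow> 'v \<Rightarrow> 'v" where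
  "proj E P v = (THE q. q \<in> P \<and> (\<forall>q'\<in>P. q' \<noteq> q \<longrightarrow> tdist E v q < tdist E v q'))"

definition fibre :: "('v \<Rightarrow> 'v \<Rightarrow> bool) \<Rightarrow> 'v set \<Rightarrow> 'v \<Rightarrow> 'v set" where
  "fibre E P q = {v. proj E P v = q}"

definition pw_stab :: "('v \<Rightarrow> 'v) set \<Rightarrow> 'v set \<Rightarrow> ('v \<Rightarrow> 'v) set" where
  "pw_stab G P = {g \<in> G. \<forall>q\<in>P. g q = q}"

definition induced_on_fibre ::
  "('v \<Rightarrow> 'v \<Rightarrow> bool) \<Rightarrow> ('v \<Rightarrow> 'v) set \<Rightarrow> 'v set \<Rightarrow> 'v \<Rightarrow> ('v \<Rightarrow> 'v) set" where
  "induced_on_fibre E G P q = (\<lambda>g. restrict g (fibre E P q)) ` pw_stab G P"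

definition natural_map ::
  "('v \<Rightarrow> 'v \<Rightarrow> bool) \<Rightarrow> 'v set \<Rightarrow> ('v \<Rightarrow> 'v) \<Rightarrow> ('v \<Rightarrow> ('v \<Rightarrow> 'v))" where
  "natural_map E P g = (\<lambda>q\<in>P. restrict g (fibre E P q))"

text \<open>Tits' property (P). The natural map is a homomorphism by construction
  (restriction to invariant subtrees), so being an isomorphism means being bijective.\<close>

definition property_P :: "('v \<Rightarrow> 'v \<Rightarrow> bool) \<Rightarrow> ('v \<Rightarrow> 'v) set \<Rightarrow> bool" where
  "property_P E G \<longleftrightarrow>
     (\<forall>P. is_path_vertices E P \<longrightarrow>
        bij_betw (natural_map E P) (pw_stab G P) (PiE P (induced_on_fibre E G P)))"

end

theory Submission imports Defs begin

lemma successively_nth: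
  "successively P xs \<Longrightarrow> Suc i < length xs \<Longrightarrow> P (xs!i) (xs!(Suc i))"
proof (induction xs arbitrary: i)
  case Nil then show ?case by simp
next
  case (Cons a xs)
  show ?case
  proof (cases i)
    case 0 then show ?thesis using Cons.prems by (cases xs) auto
  next
    case (Suc j)
    have "successively P xs" using Cons.prems by (auto simp: successively_Cons)
    then show ?thesis using Cons Suc by auto
  qed
qed

locale tsetting =
  fixes E :: "'v \<Rightarrow> 'v \<Rightarrow> bool" and VX VY :: "'v set"
  assumes sym: "E u w \<Longrightarrow> E w u"
    and conn: "(u, w) \<in> (edge_rel E)\<^sup>*"
    and acyc: "\<not> (\<exists>n (p :: nat \<Rightarrow> 'v). 3 \<le> n \<and> inj_on p {..<n} \<and>
          (\<forall>i<n. E (p i) (p (Suc i mod n))))"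
    and disj: "VX \<inter> VY = {}" and cover: "VX \<union> VY = UNIV"
    and bip: "E u w \<Longrightarrow> (u \<in> VX \<longleftrightarrow> w \<in> VY)"
begin

abbreviation "d \<equiv> tdist E"

lemma R_iff[simp]: "(a, b) \<in> edge_rel E \<longleftrightarrow> E a b"
  by (simp add: edge_rel_def)

lemma reach: "\<exists>n. (u, w) \<in> edge_rel E ^^ n"
  using conn rtrancl_power by blast

lemma d_reach: "(u, w) \<in> edge_rel E ^^ (d u w)"
  unfolding tdist_def using reach by (rule LeastI_ex)

lemma d_le: "(u, w) \<in> edge_rel E ^^ n \<Longrightarrow> d u w \<le> n"
  unfolding tdist_def by (rule Least_le)

lemma d_tri: "E w u \<Longrightarrow> d x u \<le> d x w + 1"
proof -
  assume "E w u"
  then have "(x, u) \<in> edge_rel E ^^ Suc (d x w)"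
    using d_reach[of x w] by (intro relpow_Suc_I) auto
  then show ?thesis using d_le by fastforce
qed

lemma d_parent: "d x u = Suc n \<Longrightarrow> \<exists>w. E w u \<and> d x w = n"
proof -
  assume a: "d x u = Suc n"
  from d_reach[of x u] a obtain w where w: "(x, w) \<in> edge_rel E ^^ n" "E w u"
    by (auto elim: relpow_Suc_E)
  have "d x w \<le> n" using w d_le by blast
  moreover have "d x u \<le> d x w + 1" using d_tri w by blast
  ultimately show ?thesis using a w by auto
qed

lemma d_zero: "d x u = 0 \<longleftrightarrow> u = x"
proof
  assume "d x u = 0" then show "u = x" using d_reach[of x u] by simp
next
  assume "u = x" then show "d x u = 0" using d_le[of x u 0] by simp
qed

lemma parity: "(x, u) \<in> edge_rel E ^^ n \<Longrightarrow> ((x \<in> VX) = (u \<in> VX)) = even n"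
proof (induction n arbitrary: u)
  case 0 then show ?case by simp
next
  case (Suc n)
  from Suc.prems obtain y where y: "(x, y) \<in> edge_rel E ^^ n" "E y u"
    by (auto elim: relpow_Suc_E)
  have "(y \<in> VX) = (u \<notin> VX)" using bip[OF y(2)] disj cover by blast
  with Suc.IH[OF y(1)] show ?case by (cases "x \<in> VX"; cases "u \<in> VX"; cases "even n"; simp)
qed

lemma d_neq: "E u w \<Longrightarrow> d x u \<noteq> d x w"
proof
  assume e: "E u w" and eq: "d x u = d x w"
  have "((x \<in> VX) = (u \<in> VX)) = even (d x u)" using parity d_reach by blast
  moreover have "((x \<in> VX) = (w \<in> VX)) = even (d x w)" using parity d_reach by blast
  moreover have "(u \<in> VX) = (w \<notin> VX)" using bip[OF e] disj cover by blast
  ultimately show False using eq by auto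
qed

lemma d_adj: "E u w \<Longrightarrow> d x w = d x u + 1 \<or> d x u = d x w + 1"
proof -
  assume e: "E u w"
  have "d x w \<le> d x u + 1" using d_tri[of u w x] e .
  moreover have "d x u \<le> d x w + 1" using d_tri[of w u x] sym[OF e] .
  moreover have "d x u \<noteq> d x w" using d_neq[OF e] .
  ultimately show ?thesis by linarith
qed

lemma relpow_sym: "(u, w) \<in> edge_rel E ^^ n \<Longrightarrow> (w, u) \<in> edge_rel E ^^ n"
proof (induction n arbitrary: w)
  case 0 then show ?case by simp
next
  case (Suc n)
  from Suc.prems obtain y where y: "(u, y) \<in> edge_rel E ^^ n" "E y w"
    by (auto elim: relpow_Suc_E)
  have "(w, y) \<in> edge_rel E" using sym y(2) by simp
  then show ?case using Suc.IH[OF y(1)] by (rule relpow_Suc_I2)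
qed

lemma d_sym: "d u w = d w u"
  using d_le[OF relpow_sym[OF d_reach[of u w]]] d_le[OF relpow_sym[OF d_reach[of w u]]]
  by linarith

lemma aut_relpow: "g \<in> Aut E \<Longrightarrow> (x, u) \<in> edge_rel E ^^ n \<longleftrightarrow> (g x, g u) \<in> edge_rel E ^^ n"
proof (induction n arbitrary: u)
  case 0
  have "inj g" using 0 by (simp add: Aut_def bij_def)
  then show ?case by (simp add: inj_eq)
next
  case (Suc n)
  have b: "bij g" and e: "\<And>a b. E a b \<longleftrightarrow> E (g a) (g b)" using Suc.prems by (auto simp: Aut_def)
  show ?case
  proof
    assume "(x, u) \<in> edge_rel E ^^ Suc n"
    then obtain y where "(x, y) \<in> edge_rel E ^^ n" "E y u" by (auto elim: relpow_Suc_E)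
    then have "(g x, g y) \<in> edge_rel E ^^ n" "(g y, g u) \<in> edge_rel E"
      using Suc.IH[OF Suc.prems] e by auto
    then show "(g x, g u) \<in> edge_rel E ^^ Suc n" by (rule relpow_Suc_I)
  next
    assume "(g x, g u) \<in> edge_rel E ^^ Suc n"
    then obtain y where y: "(g x, y) \<in> edge_rel E ^^ n" "E y (g u)" by (auto elim: relpow_Suc_E)
    obtain z where z: "y = g z" using b unfolding bij_def surj_def by blast
    have "(x, z) \<in> edge_rel E ^^ n" "(z, u) \<in> edge_rel E"
      using y z Suc.IH[OF Suc.prems] e by auto
    then show "(x, u) \<in> edge_rel E ^^ Suc n" by (rule relpow_Suc_I)
  qed
qed

lemma aut_d: "g \<in> Aut E \<Longrightarrow> d (g x) (g u) = d x u"
  unfolding tdist_def using aut_relpow[symmetric] by simp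


lemma chainL: "d x a = n \<Longrightarrow> d x b = n \<Longrightarrow> a \<noteq> b \<Longrightarrow>
  \<exists>zs. successively E ([a] @ zs @ [b]) \<and> distinct ([a] @ zs @ [b]) \<and> zs \<noteq> [] \<and> (\<forall>z\<in>set zs. d x z < n)"
proof (induction n arbitrary: a b)
  case 0 then show ?case using d_zero by auto
next
  case (Suc m)
  obtain a' where a': "E a' a" "d x a' = m" using d_parent Suc.prems(1) by blast
  obtain b' where b': "E b' b" "d x b' = m" using d_parent Suc.prems(2) by blast
  show ?case
  proof (cases "a' = b'")
    case True
    have "successively E ([a] @ [a'] @ [b])" using a' b' True sym by simp
    moreover have "distinct ([a] @ [a'] @ [b])" using a' b' Suc.prems True by auto
    ultimately show ?thesis using a' by (intro exI[of _ "[a']"]) auto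
  next
    case False
    from Suc.IH[OF a'(2) b'(2) False] obtain zs where
      zs: "successively E ([a'] @ zs @ [b'])" "distinct ([a'] @ zs @ [b'])" "zs \<noteq> []"
        "\<forall>z\<in>set zs. d x z < m" by blast
    let ?ys = "a' # zs @ [b']"
    have s: "successively E ([a] @ ?ys @ [b])"
      using zs(1) zs(3) a' b' sym by (auto simp: successively_append_iff successively_Cons)
    have dl: "\<forall>z\<in>set ?ys. d x z \<le> m" using zs(4) a' b' by auto
    have "a \<notin> set ?ys" "b \<notin> set ?ys" using dl Suc.prems by fastforce+
    then have "distinct ([a] @ ?ys @ [b])" using zs(2) Suc.prems(3) by auto
    with s show ?thesis using dl by (intro exI[of _ ?ys]) auto
  qed
qed

lemma NB:
  assumes "E u a" "E u b" "a \<noteq> b" "d x a < d x u" "d x b < d x u"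
  shows False
proof -
  have ea: "d x u = d x a + 1" using d_adj[OF assms(1), of x] assms(4) by auto
  have eb: "d x u = d x b + 1" using d_adj[OF assms(2), of x] assms(5) by auto
  obtain zs where zs: "successively E ([a] @ zs @ [b])" "distinct ([a] @ zs @ [b])" "zs \<noteq> []"
      "\<forall>z\<in>set zs. d x z < d x a"
    using chainL[of x a "d x a" b] ea eb assms(3) by auto
  define cyc where "cyc = u # ([a] @ zs @ [b])"
  define L where "L = length cyc"
  have L3: "3 \<le> L" using zs(3) unfolding L_def cyc_def by (cases zs) auto
  have "u \<notin> set ([a] @ zs @ [b])" using zs(4) ea eb by fastforce
  then have dc: "distinct cyc" using zs(2) unfolding cyc_def by simp
  have sc: "successively E cyc" using zs(1) assms(1) unfolding cyc_def by simp
  have inj: "inj_on (\<lambda>i. cyc ! i) {..<L}"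
    using dc unfolding inj_on_def L_def by (simp add: nth_eq_iff_index_eq)
  have edges: "\<forall>i<L. E (cyc ! i) (cyc ! (Suc i mod L))"
  proof (intro allI impI)
    fix i assume i: "i < L"
    show "E (cyc ! i) (cyc ! (Suc i mod L))"
    proof (cases "Suc i < L")
      case True
      then show ?thesis using successively_nth[OF sc] unfolding L_def by simp
    next
      case False
      then have "Suc i = L" using i by simp
      moreover have "cyc ! i = b" using \<open>Suc i = L\<close> unfolding L_def cyc_def
        by (metis diff_Suc_1 last_conv_nth last_snoc list.distinct(1) append_Cons append_Nil length_Cons)
      ultimately show ?thesis using sym[OF assms(2)] unfolding cyc_def by simp
    qed
  qed
  show False using acyc L3 inj edges by blast
qed


lemma side_aux:
  assumes uw: "E u w" and z: "E z1 z2" and n1: "\<not>(z1 = u \<and> z2 = w)" and n2: "\<not>(z1 = w \<and> z2 = u)"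
    and s1: "d z1 u < d z1 w" and s2: "\<not> d z2 u < d z2 w"
  shows False
proof -
  define a where "a = d z1 u"
  have h1: "d z1 w = a + 1" using d_adj[OF uw, of z1] s1 unfolding a_def by auto
  define b where "b = d z2 w"
  have "d z2 u \<noteq> d z2 w" using d_neq[OF uw] .
  then have h2: "d z2 u = b + 1" using d_adj[OF uw, of z2] s2 unfolding b_def by auto
  have "d u z2 = d u z1 + 1 \<or> d u z1 = d u z2 + 1" using d_adj[OF z] .
  moreover have "d w z2 = d w z1 + 1 \<or> d w z1 = d w z2 + 1" using d_adj[OF z] .
  ultimately have ab: "a = b" using h1 h2 d_sym[of u z1] d_sym[of u z2] d_sym[of w z1] d_sym[of w z2]
    unfolding a_def b_def by linarith
  show False
  proof (cases a)
    case 0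
    then have "z1 = u" using d_zero d_sym unfolding a_def by metis
    moreover have "z2 = w" using 0 ab d_zero d_sym unfolding b_def by metis
    ultimately show False using n1 by blast
  next
    case (Suc a')
    have "d w z2 = Suc a'" using ab Suc d_sym unfolding b_def by metis
    then obtain y where y: "E y z2" "d w y = a'" using d_parent by blast
    have "d y u \<le> d y w + 1" using d_tri sym[OF uw] by blast
    then have "d u y < d u z2" using y h2 ab Suc d_sym[of y u] d_sym[of y w] d_sym[of u z2] d_sym[of z2 u]
      unfolding b_def by linarith
    moreover have "d u z1 < d u z2" using h2 ab d_sym[of u z1] d_sym[of u z2] unfolding a_def b_def by linarith
    moreover have "E z2 z1" "E z2 y" using sym z y by auto
    ultimately have "z1 = y" using NB by blast
    then have "d w z1 = a'" using y by simp
    then show False using h1 d_sym[of w z1] Suc unfolding a_def by linarith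
  qed
qed

lemma side:
  assumes "E u w" "E z1 z2" "\<not>(z1 = u \<and> z2 = w)" "\<not>(z1 = w \<and> z2 = u)"
  shows "(d z1 u < d z1 w) = (d z2 u < d z2 w)"
  using side_aux[OF assms] side_aux[OF assms(1) sym[OF assms(2)]] assms(3,4) by blast

end

locale pth = tsetting E VX VY for E :: "'v \<Rightarrow> 'v \<Rightarrow> bool" and VX VY +
  fixes I :: "int set" and p :: "int \<Rightarrow> 'v" and P :: "'v set"
  assumes Ine: "I \<noteq> {}"
    and convex: "\<And>i j k. i \<in> I \<Longrightarrow> k \<in> I \<Longrightarrow> i \<le> j \<Longrightarrow> j \<le> k \<Longrightarrow> j \<in> I"
    and pinj: "inj_on p I"
    and padj: "\<And>i. i \<in> I \<Longrightarrow> i + 1 \<in> I \<Longrightarrow> E (p i) (p (i + 1))"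
    and Pdef: "P = p ` I"
begin

lemma path_const_aux:
  assumes step: "\<And>k. k \<in> I \<Longrightarrow> k + 1 \<in> I \<Longrightarrow> Q (p k) = Q (p (k + 1))"
    and i: "i \<in> I"
  shows "i + int n \<in> I \<Longrightarrow> Q (p i) = Q (p (i + int n))"
proof (induction n)
  case 0 then show ?case by simp
next
  case (Suc n)
  have m: "i + int n \<in> I" using convex[OF i Suc.prems] by simp
  have m1: "i + int n + 1 \<in> I" using Suc.prems by (simp add: algebra_simps)
  have "Q (p (i + int n)) = Q (p (i + int n + 1))" using step[OF m m1] .
  then have h: "Q (p i) = Q (p (i + int n + 1))" using Suc.IH[OF m] by (rule trans[rotated])
  have e: "i + int (Suc n) = i + int n + 1" by simp
  show ?case unfolding e by (rule h)
qed

lemma path_const: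
  assumes step: "\<And>k. k \<in> I \<Longrightarrow> k + 1 \<in> I \<Longrightarrow> Q (p k) = Q (p (k + 1))"
    and i: "i \<in> I" and j: "j \<in> I"
  shows "Q (p i) = Q (p j)"
proof (cases "i \<le> j")
  case True
  then have "j = i + int (nat (j - i))" by simp
  then show ?thesis using path_const_aux[OF step i, of "nat (j - i)"] j by metis
next
  case False
  then have "i = j + int (nat (i - j))" by simp
  then show ?thesis using path_const_aux[OF step j, of "nat (i - j)"] i by metis
qed

lemma uniq_aux:
  assumes i: "i \<in> I" and j: "j \<in> I" and ij: "i < j" and eq: "d v (p i) = d v (p j)"
    and mn: "\<forall>k\<in>I. d v (p j) \<le> d v (p k)"
  shows False
proof -
  define f where "f k = d v (p k)" for k
  define K where "K = {i..j}"
  have KI: "K \<subseteq> I"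
  proof
    fix k assume "k \<in> K"
    then have "i \<le> k" "k \<le> j" unfolding K_def by auto
    then show "k \<in> I" by (rule convex[OF i j])
  qed
  have fK: "finite K" "K \<noteq> {}" unfolding K_def using ij by auto
  define Mx where "Mx = Max (f ` K)"
  have "Mx \<in> f ` K" unfolding Mx_def using fK by (intro Max_in) auto
  then obtain k0 where k0: "k0 \<in> K" "f k0 = Mx" by (metis imageE)
  have le: "\<And>k. k \<in> K \<Longrightarrow> f k \<le> Mx" unfolding Mx_def using fK by auto
  have i1: "i + 1 \<in> K" unfolding K_def using ij by auto
  have "E (p i) (p (i + 1))" using padj i KI i1 by auto
  then have "f (i + 1) \<noteq> f i" using d_neq unfolding f_def by metis
  moreover have "f j \<le> f (i + 1)" using mn KI i1 unfolding f_def by auto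
  ultimately have "f i < f (i + 1)" using eq unfolding f_def by linarith
  then have big: "f i < Mx" using le[OF i1] by linarith
  then have "k0 \<noteq> i" "k0 \<noteq> j" using k0 eq unfolding f_def by auto
  then have r: "i < k0" "k0 < j" using k0 unfolding K_def by auto
  have km: "k0 - 1 \<in> K" "k0 + 1 \<in> K" using r unfolding K_def by auto
  have e1: "E (p k0) (p (k0 - 1))" using padj[of "k0 - 1"] KI km k0 sym by auto
  have e2: "E (p k0) (p (k0 + 1))" using padj[of k0] KI km k0 by auto
  have ne: "p (k0 - 1) \<noteq> p (k0 + 1)"
  proof
    assume "p (k0 - 1) = p (k0 + 1)"
    moreover have "k0 - 1 \<in> I" "k0 + 1 \<in> I" using KI km by blast+
    ultimately have "k0 - 1 = k0 + 1" using inj_onD[OF pinj] by blast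
    then show False by simp
  qed
  have "f (k0 - 1) < f k0" using le[OF km(1)] k0 d_neq[OF e1, of v] unfolding f_def by auto
  moreover have "f (k0 + 1) < f k0" using le[OF km(2)] k0 d_neq[OF e2, of v] unfolding f_def by auto
  ultimately show False using NB[OF e1 e2 ne] unfolding f_def by blast
qed

lemma strict_min_ex: "\<exists>q\<in>P. \<forall>q'\<in>P. q' \<noteq> q \<longrightarrow> d v q < d v q'"
proof -
  have ex: "\<exists>n. \<exists>q\<in>P. d v q = n" using Ine Pdef by auto
  define m where "m = (LEAST n. \<exists>q\<in>P. d v q = n)"
  obtain q0 where q0: "q0 \<in> P" "d v q0 = m" using LeastI_ex[OF ex] unfolding m_def by blast
  have mle: "\<And>q. q \<in> P \<Longrightarrow> m \<le> d v q" unfolding m_def by (auto intro: Least_le)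
  show ?thesis
  proof (intro bexI[OF _ q0(1)] ballI impI)
    fix q' assume q': "q' \<in> P" "q' \<noteq> q0"
    show "d v q0 < d v q'"
    proof (rule ccontr)
      assume "\<not> d v q0 < d v q'"
      then have eq: "d v q0 = d v q'" using mle[OF q'(1)] q0 by auto
      obtain i where i: "i \<in> I" "q0 = p i" using q0 Pdef by auto
      obtain j where j: "j \<in> I" "q' = p j" using q' Pdef by auto
      have "i \<noteq> j" using i j q' by auto
      have mn: "\<forall>k\<in>I. d v q0 \<le> d v (p k)" using mle q0 Pdef by auto
      show False
      proof (cases "i < j")
        case True
        then show False using uniq_aux[OF i(1) j(1) True, of v] eq mn i j by auto
      next
        case False
        then have "j < i" using \<open>i \<noteq> j\<close> by auto
        then show False using uniq_aux[OF j(1) i(1), of v] eq mn i j by auto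
      qed
    qed
  qed
qed

lemma proj_spec: "proj E P v \<in> P \<and> (\<forall>q'\<in>P. q' \<noteq> proj E P v \<longrightarrow> d v (proj E P v) < d v q')"
proof -
  have "\<exists>!q. q \<in> P \<and> (\<forall>q'\<in>P. q' \<noteq> q \<longrightarrow> d v q < d v q')"
  proof -
    obtain q where q: "q \<in> P" "\<forall>q'\<in>P. q' \<noteq> q \<longrightarrow> d v q < d v q'" using strict_min_ex by blast
    show ?thesis
    proof (rule ex1I[of _ q])
      show "q \<in> P \<and> (\<forall>q'\<in>P. q' \<noteq> q \<longrightarrow> d v q < d v q')" using q by blast
    next
      fix r assume r: "r \<in> P \<and> (\<forall>q'\<in>P. q' \<noteq> r \<longrightarrow> d v r < d v q')"
      show "r = q"
      proof (rule ccontr)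
        assume "r \<noteq> q"
        then show False using r q by force
      qed
    qed
  qed
  then show ?thesis unfolding proj_def by (rule theI')
qed

lemma proj_in: "proj E P v \<in> P" using proj_spec by blast

lemma proj_eq:
  assumes "q \<in> P" "\<forall>q'\<in>P. q' \<noteq> q \<longrightarrow> d v q < d v q'"
  shows "proj E P v = q"
proof (rule ccontr)
  assume ne: "proj E P v \<noteq> q"
  have ne': "q \<noteq> proj E P v" using ne by auto
  have "d v (proj E P v) < d v q" using proj_spec[of v] assms(1) ne' by blast
  moreover have "d v q < d v (proj E P v)" using assms(2) proj_in[of v] ne by blast
  ultimately show False by simp
qed

lemma proj_self: "v \<in> P \<Longrightarrow> proj E P v = v"
proof -
  assume v: "v \<in> P"
  have "\<forall>q'\<in>P. q' \<noteq> v \<longrightarrow> d v v < d v q'"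
  proof (intro ballI impI)
    fix q' assume "q' \<in> P" "q' \<noteq> v"
    then have "d v q' \<noteq> 0" using d_zero by blast
    moreover have "d v v = 0" using d_zero by blast
    ultimately show "d v v < d v q'" by simp
  qed
  then show ?thesis by (rule proj_eq[OF v])
qed

lemma proj_adj1:
  assumes uw: "E u w" and u: "u \<notin> P"
  shows "proj E P w = proj E P u"
proof -
  define q where "q = proj E P u"
  have q: "q \<in> P" "\<forall>q'\<in>P. q' \<noteq> q \<longrightarrow> d u q < d u q'" using proj_spec unfolding q_def by blast+
  have "d q w = d q u + 1 \<or> d q u = d q w + 1" using d_adj[OF uw] .
  then have cases: "d w q = d u q + 1 \<or> d u q = d w q + 1" using d_sym[of q w] d_sym[of q u] by simp
  show ?thesis unfolding q_def[symmetric]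
  proof (rule proj_eq[OF q(1)], intro ballI impI)
    fix q' assume q': "q' \<in> P" "q' \<noteq> q"
    have lt: "d u q < d u q'" using q q' by blast
    show "d w q < d w q'"
      using cases
    proof
      assume c: "d u q = d w q + 1"
      have "d q' u \<le> d q' w + 1" using d_tri sym[OF uw] by blast
      then show ?thesis using c lt d_sym[of q' u] d_sym[of q' w] by linarith
    next
      assume c: "d w q = d u q + 1"
      have st: "\<And>k. k \<in> I \<Longrightarrow> k + 1 \<in> I \<Longrightarrow>
          (\<lambda>z. d z u < d z w) (p k) = (\<lambda>z. d z u < d z w) (p (k + 1))"
      proof -
        fix k assume k: "k \<in> I" "k + 1 \<in> I"
        have "p k \<noteq> u" "p (k + 1) \<noteq> u" using k u Pdef by auto
        then show "(\<lambda>z. d z u < d z w) (p k) = (\<lambda>z. d z u < d z w) (p (k + 1))"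
          using side[OF uw padj[OF k]] by auto
      qed
      obtain i where i: "i \<in> I" "q = p i" using q Pdef by auto
      obtain j where j: "j \<in> I" "q' = p j" using q' Pdef by auto
      have "d q u < d q w" using c d_sym[of q u] d_sym[of q w] by linarith
      then have "d q' u < d q' w" using path_const[OF st i(1) j(1)] i j by simp
      then have "d q' w = d q' u + 1" using d_adj[OF uw, of q'] by auto
      then show ?thesis using c lt d_sym[of q' u] d_sym[of q' w] by linarith
    qed
  qed
qed

lemma proj_adj:
  assumes uw: "E u w" and n: "\<not> (u \<in> P \<and> w \<in> P)"
  shows "proj E P u = proj E P w"
proof (cases "u \<in> P")
  case True
  then have "w \<notin> P" using n by blast
  then show ?thesis using proj_adj1[OF sym[OF uw]] by simp
next
  case False
  then show ?thesis using proj_adj1[OF uw] by simp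
qed

lemma proj_aut:
  assumes h: "h \<in> Aut E" and fx: "\<forall>q\<in>P. h q = q"
  shows "proj E P (h v) = proj E P v"
proof (rule proj_eq[OF proj_in], intro ballI impI)
  fix q' assume q': "q' \<in> P" "q' \<noteq> proj E P v"
  have "d v (proj E P v) < d v q'" using proj_spec q' by blast
  moreover have "d (h v) (proj E P v) = d v (proj E P v)"
    using aut_d[OF h, of v "proj E P v"] fx proj_in by simp
  moreover have "d (h v) q' = d v q'" using aut_d[OF h, of v q'] fx q' by simp
  ultimately show "d (h v) (proj E P v) < d (h v) q'" by simp
qed

end

lemma la_cong:
  assumes b: "bij_betw c (arcs_from E v) S" and gv: "g v = h v" and gw: "\<And>w. E v w \<Longrightarrow> g w = h w"
  shows "local_action E c g v S = local_action E c h v S"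
  unfolding local_action_def Let_def
proof (rule restrict_ext)
  fix x assume x: "x \<in> S"
  have "x \<in> c ` arcs_from E v" using b x by (simp add: bij_betw_def)
  then have "inv_into (arcs_from E v) c x \<in> arcs_from E v" by (rule inv_into_into)
  then obtain w where w: "inv_into (arcs_from E v) c x = (v, w)" "E v w" unfolding arcs_from_def by auto
  show "c (g (fst (inv_into (arcs_from E v) c x)), g (snd (inv_into (arcs_from E v) c x))) =
        c (h (fst (inv_into (arcs_from E v) c x)), h (snd (inv_into (arcs_from E v) c x)))"
    using w gv gw by simp
qed

context pth
begin

lemma main:
  assumes lc: "legal_colouring E VX VY X Y c"
  shows "bij_betw (natural_map E P) (pw_stab (U E VX VY X Y c M N) P)
           (PiE P (induced_on_fibre E (U E VX VY X Y c M N) P))"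
proof -
  let ?G = "U E VX VY X Y c M N"
  have nm: "natural_map E P g = restrict (\<lambda>q. restrict g (fibre E P q)) P" for g
    unfolding natural_map_def by (rule refl)
  have infib: "v \<in> fibre E P (proj E P v)" for v unfolding fibre_def by simp
  have inj: "inj_on (natural_map E P) (pw_stab ?G P)"
  proof (rule inj_onI)
    fix g1 g2 assume "g1 \<in> pw_stab ?G P" "g2 \<in> pw_stab ?G P" and eq: "natural_map E P g1 = natural_map E P g2"
    show "g1 = g2"
    proof
      fix v
      have "natural_map E P g1 (proj E P v) = natural_map E P g2 (proj E P v)" using eq by simp
      then have "restrict g1 (fibre E P (proj E P v)) = restrict g2 (fibre E P (proj E P v))"
        using proj_in unfolding natural_map_def by simp
      then have "restrict g1 (fibre E P (proj E P v)) v = restrict g2 (fibre E P (proj E P v)) v" by simp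
      then show "g1 v = g2 v" using infib by simp
    qed
  qed
  have sub: "natural_map E P ` pw_stab ?G P \<subseteq> PiE P (induced_on_fibre E ?G P)"
  proof
    fix F assume "F \<in> natural_map E P ` pw_stab ?G P"
    then obtain g where g: "g \<in> pw_stab ?G P" "F = natural_map E P g" by blast
    have "(\<lambda>q. restrict g (fibre E P q)) \<in> Pi P (induced_on_fibre E ?G P)"
      using g unfolding induced_on_fibre_def by auto
    then show "F \<in> PiE P (induced_on_fibre E ?G P)" using g nm by (simp add: restrict_PiE)
  qed
  have sup: "PiE P (induced_on_fibre E ?G P) \<subseteq> natural_map E P ` pw_stab ?G P"
  proof
    fix f assume f: "f \<in> PiE P (induced_on_fibre E ?G P)"
    define H where "H q = (SOME h. h \<in> pw_stab ?G P \<and> f q = restrict h (fibre E P q))" for q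
    have H: "H q \<in> pw_stab ?G P \<and> f q = restrict (H q) (fibre E P q)" if q: "q \<in> P" for q
    proof -
      have "f q \<in> induced_on_fibre E ?G P q" using f q by auto
      then have "\<exists>h. h \<in> pw_stab ?G P \<and> f q = restrict h (fibre E P q)"
        unfolding induced_on_fibre_def by auto
      then show ?thesis unfolding H_def by (rule someI_ex)
    qed
    have HA: "H q \<in> Aut E" if "q \<in> P" for q using H[OF that] unfolding pw_stab_def U_def by auto
    have HVX: "H q ` VX = VX" if "q \<in> P" for q using H[OF that] unfolding pw_stab_def U_def by auto
    have HM: "\<forall>v\<in>VX. local_action E c (H q) v X \<in> M" if "q \<in> P" for q
      using H[OF that] unfolding pw_stab_def U_def by auto
    have HN: "\<forall>v\<in>VY. local_action E c (H q) v Y \<in> N" if "q \<in> P" for q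
      using H[OF that] unfolding pw_stab_def U_def by auto
    have HP: "\<And>r. r \<in> P \<Longrightarrow> H q r = r" if "q \<in> P" for q
      using H[OF that] unfolding pw_stab_def by auto
    have HP': "\<forall>r\<in>P. H q r = r" if "q \<in> P" for q using HP[OF that] by blast
    have Hbij: "bij (H q)" if "q \<in> P" for q using HA[OF that] unfolding Aut_def by auto
    have Hedge: "E a b \<longleftrightarrow> E (H q a) (H q b)" if "q \<in> P" for q a b using HA[OF that] unfolding Aut_def by auto
    have HVY: "H q v \<in> VY" if qv: "q \<in> P" "v \<in> VY" for q v
    proof (rule ccontr)
      assume "H q v \<notin> VY"
      then have "H q v \<in> VX" using cover by auto
      then have "H q v \<in> H q ` VX" using HVX[OF qv(1)] by simp
      then obtain x where x: "x \<in> VX" "H q v = H q x" by (metis imageE)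
      then have "v = x" using Hbij[OF qv(1)] unfolding bij_def inj_def by blast
      then show False using x qv disj by auto
    qed
    define g where "g v = H (proj E P v) v" for v
    have pq: "proj E P v \<in> P" for v by (rule proj_in)
    have g2: "proj E P (g v) = proj E P v" for v
      unfolding g_def by (rule proj_aut[OF HA[OF pq] HP'[OF pq]])
    have g3: "g w = H (proj E P v) w" if e: "E v w" for v w
    proof (cases "proj E P w = proj E P v")
      case True then show ?thesis unfolding g_def by simp
    next
      case False
      then have "v \<in> P \<and> w \<in> P" using proj_adj[OF e] by fastforce
      then show ?thesis unfolding g_def using HP[OF pq] by simp
    qed
    have ginj: "inj g"
    proof (rule injI)
      fix u w assume eq: "g u = g w"
      then have "proj E P u = proj E P w" using g2[of u] g2[of w] by simp
      then have "H (proj E P u) u = H (proj E P u) w" using eq unfolding g_def by simp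
      then show "u = w" using Hbij[OF pq] unfolding bij_def inj_def by blast
    qed
    have gsurj: "surj g"
    proof -
      have "y \<in> range g" for y
      proof -
        let ?q = "proj E P y"
        obtain x where x: "H ?q x = y" using Hbij[OF pq] unfolding bij_def surj_def by metis
        have "proj E P (H ?q x) = proj E P x" by (rule proj_aut[OF HA[OF pq] HP'[OF pq]])
        then have "proj E P x = ?q" using x by simp
        then have "g x = y" unfolding g_def using x by simp
        then show ?thesis by blast
      qed
      then show ?thesis by blast
    qed
    have gedge: "E u w \<longleftrightarrow> E (g u) (g w)" for u w
    proof
      assume e: "E u w"
      have "E (H (proj E P u) u) (H (proj E P u) w)" using Hedge[OF pq] e by blast
      then show "E (g u) (g w)" using g3[OF e] by (simp add: g_def)
    next
      assume e: "E (g u) (g w)"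
      show "E u w"
      proof (cases "proj E P u = proj E P w")
        case True
        then have "E (H (proj E P u) u) (H (proj E P u) w)" using e by (simp add: g_def)
        then show ?thesis using Hedge[OF pq] by blast
      next
        case False
        then have "proj E P (g u) \<noteq> proj E P (g w)" using g2[of u] g2[of w] by simp
        then have gin: "g u \<in> P \<and> g w \<in> P" using proj_adj[OF e] by blast
        have i1: "inj (H (proj E P u))" "inj (H (proj E P w))" using Hbij[OF pq] bij_is_inj by blast+
        have "H (proj E P u) (g u) = g u" using HP[OF pq] gin by blast
        also have "g u = H (proj E P u) u" by (simp add: g_def)
        finally have gu: "g u = u" using injD[OF i1(1)] by (metis g_def)
        have "H (proj E P w) (g w) = g w" using HP[OF pq] gin by blast
        also have "g w = H (proj E P w) w" by (simp add: g_def)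
        finally have gw: "g w = w" using injD[OF i1(2)] by (metis g_def)
        show ?thesis using e unfolding gu gw .
      qed
    qed
    have gA: "g \<in> Aut E" unfolding Aut_def using ginj gsurj gedge by (auto simp: bij_def)
    have gX: "g v \<in> VX" if "v \<in> VX" for v unfolding g_def using HVX[OF pq] that by blast
    have gY: "g v \<in> VY" if "v \<in> VY" for v unfolding g_def using HVY[OF pq] that by blast
    have gVX: "g ` VX = VX"
    proof
      show "g ` VX \<subseteq> VX" using gX by blast
      show "VX \<subseteq> g ` VX"
      proof
        fix y assume y: "y \<in> VX"
        obtain x where x: "y = g x" using gsurj by blast
        have "x \<in> VX" using gY[of x] x y disj cover by blast
        then show "y \<in> g ` VX" using x by blast
      qed
    qed
    have lX: "bij_betw c (arcs_from E v) X" if "v \<in> VX" for v using lc that unfolding legal_colouring_def by blast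
    have lY: "bij_betw c (arcs_from E v) Y" if "v \<in> VY" for v using lc that unfolding legal_colouring_def by blast
    have gM: "local_action E c g v X \<in> M" if v: "v \<in> VX" for v
    proof -
      have "local_action E c g v X = local_action E c (H (proj E P v)) v X"
      proof (rule la_cong[OF lX[OF v]])
        show "g v = H (proj E P v) v" by (simp add: g_def)
      next
        fix w assume "E v w" then show "g w = H (proj E P v) w" by (rule g3)
      qed
      then show ?thesis using HM[OF pq] v by simp
    qed
    have gN: "local_action E c g v Y \<in> N" if v: "v \<in> VY" for v
    proof -
      have "local_action E c g v Y = local_action E c (H (proj E P v)) v Y"
      proof (rule la_cong[OF lY[OF v]])
        show "g v = H (proj E P v) v" by (simp add: g_def)
      next
        fix w assume "E v w" then show "g w = H (proj E P v) w" by (rule g3)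
      qed
      then show ?thesis using HN[OF pq] v by simp
    qed
    have gG: "g \<in> ?G" unfolding U_def using gA gVX gM gN by blast
    have "g q = q" if q: "q \<in> P" for q
    proof -
      have "g q = H q q" using proj_self[OF q] by (simp add: g_def)
      then show ?thesis using HP[OF q q] by simp
    qed
    then have gP: "g \<in> pw_stab ?G P" unfolding pw_stab_def using gG by blast
    have "natural_map E P g = f"
    proof
      fix q
      show "natural_map E P g q = f q"
      proof (cases "q \<in> P")
        case True
        have "restrict g (fibre E P q) = restrict (H q) (fibre E P q)"
          by (rule restrict_ext) (simp add: g_def fibre_def)
        then show ?thesis using True H[OF True] unfolding natural_map_def by simp
      next
        case False
        have "f q = undefined" using PiE_arb[OF f False] .
        moreover have "natural_map E P g q = undefined" using False unfolding natural_map_def by simp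
        ultimately show ?thesis by simp
      qed
    qed
    then show "f \<in> natural_map E P ` pw_stab ?G P" using gP by blast
  qed
  show ?thesis unfolding bij_betw_def using inj sub sup by blast
qed

end

theorem theorem4p2:
  fixes E :: "'v \<Rightarrow> 'v \<Rightarrow> bool"
    and VX VY :: "'v set"
    and X Y :: "'c set"
    and M N :: "('c \<Rightarrow> 'c) set"
    and c :: "'v \<times> 'v \<Rightarrow> 'c"
  assumes "X \<inter> Y = {}"
    and "\<exists>a\<in>X. \<exists>b\<in>X. a \<noteq> b"
    and "\<exists>a\<in>Y. \<exists>b\<in>Y. a \<noteq> b"
    and "subgroup M (BijGroup X)"
    and "subgroup N (BijGroup Y)"
    and "is_tree E"
    and "biregular_bipartition E VX VY X Y"
    and "legal_colouring E VX VY X Y c"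
  shows "property_P E (U E VX VY X Y c M N)"
proof -
  have t: "(\<forall>u w. E u w \<longrightarrow> E w u) \<and> (\<forall>u. \<not> E u u) \<and>
     (\<forall>u w. (u, w) \<in> (edge_rel E)\<^sup>*) \<and>
     \<not> (\<exists>n (p :: nat \<Rightarrow> 'v). 3 \<le> n \<and> inj_on p {..<n} \<and>
          (\<forall>i<n. E (p i) (p (Suc i mod n))))" using assms(6) unfolding is_tree_def .
  have b: "VX \<inter> VY = {} \<and> VX \<union> VY = UNIV \<and>
     (\<forall>u w. E u w \<longrightarrow> (u \<in> VX \<longleftrightarrow> w \<in> VY)) \<and>
     (\<forall>v\<in>VX. nbrs E v \<approx> X) \<and> (\<forall>v\<in>VY. nbrs E v \<approx> Y)"
    using assms(7) unfolding biregular_bipartition_def .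
  have t1: "\<forall>u w. E u w \<longrightarrow> E w u" using t by (rule conjunct1)
  have t3: "\<forall>u w. (u, w) \<in> (edge_rel E)\<^sup>*" using t by (elim conjE)
  have b3: "\<forall>u w. E u w \<longrightarrow> (u \<in> VX \<longleftrightarrow> w \<in> VY)" using b by (elim conjE)
  interpret tsetting E VX VY
  proof
    fix u w
    show "E u w \<Longrightarrow> E w u" using t1 by blast
    show "(u, w) \<in> (edge_rel E)\<^sup>*" using t3 by blast
    show "E u w \<Longrightarrow> (u \<in> VX \<longleftrightarrow> w \<in> VY)" using b3 by blast
  next
    show "\<not> (\<exists>n (p :: nat \<Rightarrow> 'v). 3 \<le> n \<and> inj_on p {..<n} \<and>
          (\<forall>i<n. E (p i) (p (Suc i mod n))))" using t by (elim conjE)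
    show "VX \<inter> VY = {}" using b by (elim conjE)
    show "VX \<union> VY = UNIV" using b by (elim conjE)
  qed
  show ?thesis unfolding property_P_def
  proof (intro allI impI)
    fix P assume "is_path_vertices E P"
    then obtain I and p :: "int \<Rightarrow> 'v" where
      I: "I \<noteq> {}" "\<forall>i j k. i \<in> I \<longrightarrow> k \<in> I \<longrightarrow> i \<le> j \<longrightarrow> j \<le> k \<longrightarrow> j \<in> I"
        "inj_on p I" "\<forall>i. i \<in> I \<longrightarrow> i + 1 \<in> I \<longrightarrow> E (p i) (p (i + 1))" "P = p ` I"
      unfolding is_path_vertices_def by blast
    interpret pth E VX VY I p P
    proof
      show "I \<noteq> {}" by (rule I(1))
      show "inj_on p I" by (rule I(3))
      show "P = p ` I" by (rule I(5))
    next
      fix i j k show "i \<in> I \<Longrightarrow> k \<in> I \<Longrightarrow> i \<le> j \<Longrightarrow> j \<le> k \<Longrightarrow> j \<in> I" using I(2) by blast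
    next
      fix i show "i \<in> I \<Longrightarrow> i + 1 \<in> I \<Longrightarrow> E (p i) (p (i + 1))" using I(4) by blast
    qed
    show "bij_betw (natural_map E P) (pw_stab (U E VX VY X Y c M N) P)
        (PiE P (induced_on_fibre E (U E VX VY X Y c M N) P))"
      using main[OF assms(8)] .
  qed
qed

end
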